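(* Let $i,j$ be integers with $0\leq j\leq i$. Then, as an identity of polynomials in $q$ (equivalently, of formal power series in $q$), $$\sum_{k=0}^{j}(q^{i-k+1};q)_k\,{j\brack k}\, q^{(i-k)(j-k)}=\sum_{\lambda\in O(i,j)}(-1)^{ol(\lambda)}\,q^{|\lambda|+ol(\lambda)\,(i-\ell(\lambda)+1)}\,q^{(i-\ell(\lambda))(j-\ell(\lambda))},$$ where $O(i,j)$ is the set of overpartitions defined in the context.
   Context: For $k\geq 1$, $(a;q)_k=(1-a)(1-aq)\cdots(1-aq^{k-1})$ and $(a;q)_0=1$; ${j\brack k}=\frac{(q;q)_j}{(q;q)_k(q;q)_{j-k}}$ is the Gaussian (q-binomial) coefficient. An overpartition with $k$ nonnegative parts is a sequence $\lambda=(\lambda_1,\dots,\lambda_k)$ of integers with $\lambda_1\geq\lambda_2\geq\cdots\geq\lambda_k\geq 0$ in which the first occurrence (leftmost position) of each value may or may not be marked as "overlined" (the value $0$ may also be overlined); thus overlined parts have distinct values. Its size is $|\lambda|=\sum_r\lambda_r$, its length $\ell(\lambda)=k$ counts all parts including zeros, and $ol(\lambda)$ is the number of overlined parts. For $0\leq k\leq j$, $O(i,j,k)$ denotes the set of overpartitions $\lambda$ with exactly $k$ nonnegative parts such that (1) every part is at most $j-1$; and (2) when $k\geq 2$, for each $1\leq s\leq k-1$ and each position $r$ with $\lambda_r=j-s$, at least $k-s$ of the parts $\lambda_{r+1},\dots,\lambda_k$ are overlined. (The paper also views each overline of an element of $O(i,j,k)$ as carrying weight $i-k+1$; this weight appears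 as the factor $i-\ell(\lambda)+1$ in the exponent.) $O(i,0,0)$ consists only of the empty partition, and $O(i,j)=\biguplus_{k=0}^{j}O(i,j,k)$. *)

theory Defs
  imports "HOL-Computational_Algebra.Polynomial"
begin

definition qX :: "int poly" where "qX = [:0, 1:]"

definition qpoch :: "int poly \<Rightarrow> nat \<Rightarrow> int poly" where
  "qpoch a k = (\<Prod>m<k. 1 - a * qX ^ m)"

text \<open>Gaussian binomial coefficient [j choose k] = (q;q)_j / ((q;q)_k (q;q)_(j-k)) (exact division).\<close>
definition qbinom :: "nat \<Rightarrow> nat \<Rightarrow> int poly" where
  "qbinom j k = qpoch qX j div (qpoch qX k * qpoch qX (j - k))"

text \<open>An overpartition with nonnegative parts: a list of (value, overlined) pairs,
  values weakly decreasing, and only the first (leftmost) occurrence of a value may be overlined.\<close>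
definition is_overpartition :: "(nat \<times> bool) list \<Rightarrow> bool" where
  "is_overpartition lam \<longleftrightarrow>
     (\<forall>r. Suc r < length lam \<longrightarrow> fst (lam ! r) \<ge> fst (lam ! Suc r)) \<and>
     (\<forall>r < length lam. snd (lam ! r) \<longrightarrow> (\<forall>r' < r. fst (lam ! r') \<noteq> fst (lam ! r)))"

definition op_size :: "(nat \<times> bool) list \<Rightarrow> nat" where
  "op_size lam = (\<Sum>p\<leftarrow>lam. fst p)"

definition op_ol :: "(nat \<times> bool) list \<Rightarrow> nat" where
  "op_ol lam = length (filter snd lam)"

text \<open>O(i,j,k) (0-based positions; it does not actually depend on i).\<close>
definition O_set :: "nat \<Rightarrow> nat \<Rightarrow> nat \<Rightarrow> (nat \<times> bool) list set" where
  "O_set i j k = {lam. is_overpartition lam \<and> length lam = k \<and>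
      (\<forall>r < k. fst (lam ! r) < j) \<and>
      (k \<ge> 2 \<longrightarrow> (\<forall>s \<in> {1..k-1}. \<forall>r < k. fst (lam ! r) = j - s \<longrightarrow>
          card {r'. r < r' \<and> r' < k \<and> snd (lam ! r')} \<ge> k - s))}"

definition O_all :: "nat \<Rightarrow> nat \<Rightarrow> (nat \<times> bool) list set" where
  "O_all i j = (\<Union>k\<in>{0..j}. O_set i j k)"

end

theory Submission
  imports Defs
begin


fun G :: "nat \<Rightarrow> nat \<Rightarrow> int poly" where
  "G j 0 = 1"
| "G 0 (Suc k) = 0"
| "G (Suc j) (Suc k) = G j k + qX ^ Suc k * G j (Suc k)"

lemma G_zero: "j < k \<Longrightarrow> G j k = 0"
proof (induction j arbitrary: k)
  case 0 then show ?case by (cases k) auto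
next
  case (Suc j) then show ?case by (cases k) auto
qed

lemma G_diag: "G j j = 1"
  by (induction j) (auto simp: G_zero)

lemma qpoch_Suc: "qpoch qX (Suc n) = qpoch qX n * (1 - qX ^ Suc n)"
  by (simp add: qpoch_def)

lemma qpoch_nz: "qpoch qX n \<noteq> 0"
proof (induction n)
  case 0 then show ?case by (simp add: qpoch_def)
next
  case (Suc n)
  have "poly (1 - qX ^ Suc n) 0 = 1" unfolding qX_def by (simp only: poly_diff poly_1 poly_power) simp
  then have nz: "1 - qX ^ Suc n \<noteq> 0" by (metis one_neq_zero poly_0)
  show ?case unfolding qpoch_Suc using Suc.IH nz by (rule no_zero_divisors)
qed

lemma qfact: "k \<le> j \<Longrightarrow> qpoch qX j = G j k * qpoch qX k * qpoch qX (j - k)"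
proof (induction j arbitrary: k)
  case 0 then show ?case by (simp add: qpoch_def)
next
  case (Suc j)
  show ?case
  proof (cases k)
    case 0 then show ?thesis by (simp add: qpoch_def)
  next
    case (Suc m)
    then have mj: "m \<le> j" using Suc.prems by simp
    show ?thesis
    proof (cases "m = j")
      case True
      have "qpoch qX j = G j j * qpoch qX j * qpoch qX 0" using Suc.IH[of j] by simp
      then show ?thesis using True Suc G_zero[of j "Suc j"]
        by (simp add: qpoch_Suc qpoch_def[of _ 0] G_diag)
    next
      case False
      then have mlt: "m < j" using mj by simp
      have h1: "qpoch qX j = G j m * qpoch qX m * qpoch qX (j - m)" using Suc.IH[of m] mlt by simp
      have h2: "qpoch qX j = G j (Suc m) * qpoch qX (Suc m) * qpoch qX (j - Suc m)" using Suc.IH[of "Suc m"] mlt by simp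
      have e: "j - m = Suc (j - Suc m)" using mlt by simp
      have pw: "qX ^ Suc m * qX ^ (j - m) = qX ^ Suc j" proof -
        have "Suc m + (j - m) = Suc j" using mlt by simp
        then show ?thesis by (metis power_add)
      qed
      have "G (Suc j) (Suc m) * qpoch qX (Suc m) * qpoch qX (Suc j - Suc m)
          = (G j m * qpoch qX m * qpoch qX (j - m)) * (1 - qX ^ Suc m)
            + qX ^ Suc m * (G j (Suc m) * qpoch qX (Suc m) * qpoch qX (j - Suc m)) * (1 - qX ^ (j - m))"
        by (simp add: qpoch_Suc e algebra_simps)
      also have "\<dots> = qpoch qX j * (1 - qX ^ Suc m) + qX ^ Suc m * qpoch qX j * (1 - qX ^ (j - m))"
        using h1 h2 by simp
      also have "\<dots> = qpoch qX j * (1 - qX ^ Suc m * qX ^ (j - m))" by (simp add: algebra_simps)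
      also have "\<dots> = qpoch qX (Suc j)" unfolding pw qpoch_Suc ..
      finally show ?thesis using Suc by simp
    qed
  qed
qed

lemma qbinom_G: "k \<le> j \<Longrightarrow> qbinom j k = G j k"
proof -
  assume True: "k \<le> j"
  have "qpoch qX j = G j k * (qpoch qX k * qpoch qX (j - k))" using qfact[OF True] by (simp add: mult.assoc)
  moreover have "qpoch qX k * qpoch qX (j - k) \<noteq> 0" using qpoch_nz by simp
  ultimately show ?thesis unfolding qbinom_def by simp
qed


definition cnt :: "(nat \<times> bool) list \<Rightarrow> nat \<Rightarrow> nat" where
  "cnt lam r = card {r'. r < r' \<and> r' < length lam \<and> snd (lam ! r')}"

definition Qset :: "nat \<Rightarrow> nat \<Rightarrow> (nat \<times> bool) list set" where
  "Qset j k = {lam. is_overpartition lam \<and> length lam = k \<and> (\<forall>r<k. fst (lam ! r) + k \<le> j + cnt lam r)}"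

definition sh :: "nat \<times> bool \<Rightarrow> nat \<times> bool" where "sh x = (Suc (fst x), snd x)"
definition unsh :: "nat \<times> bool \<Rightarrow> nat \<times> bool" where "unsh x = (fst x - 1, snd x)"

lemma cnt_le: "cnt lam r \<le> length lam - Suc r"
proof -
  have "{r'. r < r' \<and> r' < length lam \<and> snd (lam ! r')} \<subseteq> {Suc r..<length lam}" by auto
  then have "cnt lam r \<le> card {Suc r..<length lam}" unfolding cnt_def by (intro card_mono) auto
  then show ?thesis by simp
qed

lemma cnt_map:
  assumes h: "\<And>x. snd (f x) = snd x" shows "cnt (map f lam) r = cnt lam r"
proof -
  have "{r'. r < r' \<and> r' < length lam \<and> snd (map f lam ! r')} = {r'. r < r' \<and> r' < length lam \<and> snd (lam ! r')}"
    using h by (metis (lifting) nth_map)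
  then show ?thesis unfolding cnt_def by simp
qed

lemma cnt_snoc: "r < length lam \<Longrightarrow> cnt (lam @ [x]) r = cnt lam r + (if snd x then 1 else 0)"
proof -
  assume r: "r < length lam"
  let ?S = "{r'. r < r' \<and> r' < length lam \<and> snd (lam ! r')}"
  have eq: "{r'. r < r' \<and> r' < length (lam @ [x]) \<and> snd ((lam @ [x]) ! r')}
       = ?S \<union> (if snd x then {length lam} else {})"
    using r by (auto simp: nth_append less_Suc_eq)
  have "finite ?S" by (rule finite_subset[of _ "{..<length lam}"]) auto
  moreover have "length lam \<notin> ?S" by auto
  ultimately show ?thesis unfolding cnt_def eq by auto
qed

lemma op_sorted:
  assumes "is_overpartition lam" "r \<le> r'" "r' < length lam"
  shows "fst (lam ! r') \<le> fst (lam ! r)"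
  using assms(2,3)
proof (induction r' rule: dec_induct)
  case base then show ?case by simp
next
  case (step n)
  then have "fst (lam ! Suc n) \<le> fst (lam ! n)" using assms(1) unfolding is_overpartition_def by auto
  with step show ?case by simp
qed

lemma op_map_sh: "is_overpartition (map sh lam) \<longleftrightarrow> is_overpartition lam"
  unfolding is_overpartition_def by (simp add: sh_def)

lemma op_snoc_D: "is_overpartition (lam @ [x]) \<Longrightarrow> is_overpartition lam"
proof -
  assume a: "is_overpartition (lam @ [x])"
  show ?thesis unfolding is_overpartition_def
  proof (intro conjI allI impI)
    fix r assume r: "Suc r < length lam"
    then have "fst ((lam @ [x]) ! Suc r) \<le> fst ((lam @ [x]) ! r)" using a unfolding is_overpartition_def by simp
    then show "fst (lam ! Suc r) \<le> fst (lam ! r)" using r by (simp add: nth_append)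
  next
    fix r r' assume r: "r < length lam" "snd (lam ! r)" "r' < r"
    have r2: "r < length (lam @ [x])" "snd ((lam @ [x]) ! r)" using r by (auto simp: nth_append)
    then have "\<forall>r'<r. fst ((lam @ [x]) ! r') \<noteq> fst ((lam @ [x]) ! r)"
      using a unfolding is_overpartition_def by blast
    then have "fst ((lam @ [x]) ! r') \<noteq> fst ((lam @ [x]) ! r)" using r by blast
    then show "fst (lam ! r') \<noteq> fst (lam ! r)" using r by (simp add: nth_append)
  qed
qed

lemma op_snoc_I0:
  assumes a: "is_overpartition lam" and x: "fst x = 0" and h: "snd x \<Longrightarrow> \<forall>r<length lam. fst (lam ! r) \<noteq> 0"
  shows "is_overpartition (lam @ [x])"
  unfolding is_overpartition_def
proof (intro conjI allI impI)
  fix r assume r: "Suc r < length (lam @ [x])"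
  show "fst ((lam @ [x]) ! Suc r) \<le> fst ((lam @ [x]) ! r)"
  proof (cases "Suc r < length lam")
    case True then show ?thesis using a unfolding is_overpartition_def by (simp add: nth_append)
  next
    case False then have "Suc r = length lam" using r by simp
    then show ?thesis using x by (simp add: nth_append)
  qed
next
  fix r r' assume r: "r < length (lam @ [x])" "snd ((lam @ [x]) ! r)" "r' < r"
  show "fst ((lam @ [x]) ! r') \<noteq> fst ((lam @ [x]) ! r)"
  proof (cases "r < length lam")
    case True then show ?thesis using a r unfolding is_overpartition_def by (simp add: nth_append)
  next
    case False then have "r = length lam" using r by simp
    then show ?thesis using x h r by (simp add: nth_append)
  qed
qed



lemma Q_fst_lt: "lam \<in> Qset j k \<Longrightarrow> r < k \<Longrightarrow> fst (lam ! r) < j"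
  using cnt_le[of lam r] unfolding Qset_def by force

lemma Q_len: "lam \<in> Qset j k \<Longrightarrow> k \<le> j"
proof (cases k)
  case (Suc m)
  assume a: "lam \<in> Qset j k"
  then have "fst (lam ! m) + k \<le> j + cnt lam m" "length lam = k" using Suc unfolding Qset_def by auto
  moreover have "cnt lam m \<le> length lam - Suc m" by (rule cnt_le)
  ultimately show ?thesis using Suc by simp
qed simp

lemma O_set_eq: "O_set i j k = Qset j k"
proof (intro set_eqI iffI)
  fix lam assume a: "lam \<in> O_set i j k"
  then have ov: "is_overpartition lam" and len: "length lam = k" and lt: "\<forall>r<k. fst (lam ! r) < j"
    and c2: "k \<ge> 2 \<longrightarrow> (\<forall>s \<in> {1..k-1}. \<forall>r < k. fst (lam ! r) = j - s \<longrightarrow>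
          card {r'. r < r' \<and> r' < k \<and> snd (lam ! r')} \<ge> k - s)"
    unfolding O_set_def by auto
  have "fst (lam ! r) + k \<le> j + cnt lam r" if r: "r < k" for r
  proof (cases "fst (lam ! r) + k \<le> j")
    case True then show ?thesis by simp
  next
    case False
    have vj: "fst (lam ! r) < j" using lt r by simp
    define s where "s = j - fst (lam ! r)"
    have k2: "k \<ge> 2" using False vj by linarith
    have s1: "s \<in> {1..k-1}" using False vj unfolding s_def by auto
    have "fst (lam ! r) = j - s" using vj unfolding s_def by simp
    then have "card {r'. r < r' \<and> r' < k \<and> snd (lam ! r')} \<ge> k - s" using c2 k2 s1 r by blast
    then show ?thesis using vj unfolding cnt_def len s_def by linarith
  qed
  then show "lam \<in> Qset j k" using ov len unfolding Qset_def by auto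
next
  fix lam assume a: "lam \<in> Qset j k"
  then have ov: "is_overpartition lam" and len: "length lam = k"
    and c: "\<forall>r<k. fst (lam ! r) + k \<le> j + cnt lam r" unfolding Qset_def by auto
  have lt: "\<forall>r<k. fst (lam ! r) < j" using Q_fst_lt[OF a] by auto
  have "card {r'. r < r' \<and> r' < k \<and> snd (lam ! r')} \<ge> k - s"
    if "s \<in> {1..k-1}" "r < k" "fst (lam ! r) = j - s" for s r
  proof -
    have "fst (lam ! r) + k \<le> j + cnt lam r" using c that(2) by blast
    then show ?thesis using that len lt unfolding cnt_def by (cases "s \<le> j") auto
  qed
  then show "lam \<in> O_set i j k" using ov len lt unfolding O_set_def by auto
qed

lemma Q_map_sh: "map sh mu \<in> Qset (Suc j) k \<longleftrightarrow> mu \<in> Qset j k"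
proof -
  have c: "cnt (map sh mu) r = cnt mu r" for r by (rule cnt_map) (simp add: sh_def)
  show ?thesis unfolding Qset_def by (auto simp: op_map_sh c sh_def)
qed

lemma Q_snoc_F: "mu @ [(0, False)] \<in> Qset (Suc j) (Suc m) \<longleftrightarrow> mu \<in> Qset j m"
proof
  assume a: "mu @ [(0, False)] \<in> Qset (Suc j) (Suc m)"
  then have len: "length mu = m" and ov: "is_overpartition mu" unfolding Qset_def by (auto dest: op_snoc_D)
  have "fst (mu ! r) + m \<le> j + cnt mu r" if r: "r < m" for r
  proof -
    have "fst ((mu @ [(0, False)]) ! r) + Suc m \<le> Suc j + cnt (mu @ [(0, False)]) r"
      using a r unfolding Qset_def by auto
    then show ?thesis using r len by (simp add: nth_append cnt_snoc)
  qed
  then show "mu \<in> Qset j m" using len ov unfolding Qset_def by auto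
next
  assume a: "mu \<in> Qset j m"
  then have len: "length mu = m" and ov: "is_overpartition mu"
    and c: "\<forall>r<m. fst (mu ! r) + m \<le> j + cnt mu r" unfolding Qset_def by auto
  have mj: "m \<le> j" using Q_len[OF a] .
  have ov2: "is_overpartition (mu @ [(0, False)])" by (rule op_snoc_I0[OF ov]) auto
  have "fst ((mu @ [(0, False)]) ! r) + Suc m \<le> Suc j + cnt (mu @ [(0, False)]) r" if r: "r < Suc m" for r
  proof (cases "r < m")
    case True then show ?thesis using c len by (simp add: nth_append cnt_snoc)
  next
    case False then have "r = m" using r by simp
    then show ?thesis using len mj by (simp add: nth_append)
  qed
  then show "mu @ [(0, False)] \<in> Qset (Suc j) (Suc m)" using ov2 len unfolding Qset_def by auto
qed

lemma Q_snoc_T: "map sh mu @ [(0, True)] \<in> Qset (Suc j) (Suc m) \<longleftrightarrow> mu \<in> Qset j m"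
proof
  assume a: "map sh mu @ [(0, True)] \<in> Qset (Suc j) (Suc m)"
  then have len: "length mu = m" and ov: "is_overpartition mu" unfolding Qset_def
    by (auto dest: op_snoc_D simp: op_map_sh)
  have "fst (mu ! r) + m \<le> j + cnt mu r" if r: "r < m" for r
  proof -
    have "fst ((map sh mu @ [(0, True)]) ! r) + Suc m \<le> Suc j + cnt (map sh mu @ [(0, True)]) r"
      using a r unfolding Qset_def by auto
    moreover have "cnt (map sh mu) r = cnt mu r" by (rule cnt_map) (simp add: sh_def)
    ultimately show ?thesis using r len by (simp add: nth_append cnt_snoc sh_def)
  qed
  then show "mu \<in> Qset j m" using len ov unfolding Qset_def by auto
next
  assume a: "mu \<in> Qset j m"
  then have len: "length mu = m" and ov: "is_overpartition mu"
    and c: "\<forall>r<m. fst (mu ! r) + m \<le> j + cnt mu r" unfolding Qset_def by auto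
  have mj: "m \<le> j" using Q_len[OF a] .
  have ov2: "is_overpartition (map sh mu @ [(0, True)])"
    by (rule op_snoc_I0) (auto simp: op_map_sh ov sh_def)
  have "fst ((map sh mu @ [(0, True)]) ! r) + Suc m \<le> Suc j + cnt (map sh mu @ [(0, True)]) r" if r: "r < Suc m" for r
  proof (cases "r < m")
    case True
    moreover have "cnt (map sh mu) r = cnt mu r" by (rule cnt_map) (simp add: sh_def)
    ultimately show ?thesis using c len by (simp add: nth_append cnt_snoc sh_def)
  next
    case False then have "r = m" using r by simp
    then show ?thesis using len mj by (simp add: nth_append)
  qed
  then show "map sh mu @ [(0, True)] \<in> Qset (Suc j) (Suc m)" using ov2 len unfolding Qset_def by auto
qed



lemma sh_unsh: "\<forall>x\<in>set xs. fst x > 0 \<Longrightarrow> map sh (map unsh xs) = xs"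
  by (induction xs) (auto simp: sh_def unsh_def)

lemma Q_decomp: "Qset (Suc j) (Suc m) = map sh ` Qset j (Suc m) \<union> (\<lambda>mu. mu @ [(0, False)]) ` Qset j m
   \<union> (\<lambda>mu. map sh mu @ [(0, True)]) ` Qset j m"
proof (intro set_eqI iffI)
  fix lam assume a: "lam \<in> Qset (Suc j) (Suc m)"
  then have len: "length lam = Suc m" and ov: "is_overpartition lam" unfolding Qset_def by auto
  have ne: "lam \<noteq> []" using len by auto
  have lastn: "last lam = lam ! m" using last_conv_nth[OF ne] len by simp
  have dec: "lam = butlast lam @ [last lam]" using ne by simp
  obtain v b where vb: "last lam = (v, b)" by (cases "last lam")
  show "lam \<in> map sh ` Qset j (Suc m) \<union> (\<lambda>mu. mu @ [(0, False)]) ` Qset j m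
   \<union> (\<lambda>mu. map sh mu @ [(0, True)]) ` Qset j m"
  proof (cases "v > 0")
    case True
    have "\<forall>x\<in>set lam. fst x > 0"
    proof
      fix x assume "x \<in> set lam"
      then obtain r where r: "r < length lam" "x = lam ! r" by (auto simp: in_set_conv_nth)
      have "fst (lam ! m) \<le> fst (lam ! r)" using op_sorted[OF ov, of r m] r len by simp
      then show "fst x > 0" using True vb lastn r by simp
    qed
    then have e: "map sh (map unsh lam) = lam" by (rule sh_unsh)
    then have "map unsh lam \<in> Qset j (Suc m)" using a Q_map_sh by metis
    then show ?thesis using e by (metis UnI1 image_eqI)
  next
    case False
    then have v0: "v = 0" by simp
    show ?thesis
    proof (cases b)
      case False
      then have "butlast lam @ [(0, False)] = lam" using dec vb v0 by simp
      then have "butlast lam \<in> Qset j m" using a Q_snoc_F by metis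
      then show ?thesis using \<open>butlast lam @ [(0, False)] = lam\<close> by (metis UnI1 UnI2 image_eqI)
    next
      case True
      have "\<forall>x\<in>set (butlast lam). fst x > 0"
      proof
        fix x assume "x \<in> set (butlast lam)"
        then obtain r where r: "r < m" "x = butlast lam ! r" using len by (auto simp: in_set_conv_nth)
        have "snd (lam ! m)" using True vb lastn by simp
        then have "fst (lam ! r) \<noteq> fst (lam ! m)" using ov r len unfolding is_overpartition_def by auto
        then show "fst x > 0" using r vb v0 lastn len by (simp add: nth_butlast)
      qed
      then have e: "map sh (map unsh (butlast lam)) = butlast lam" by (rule sh_unsh)
      then have e2: "map sh (map unsh (butlast lam)) @ [(0, True)] = lam" using dec vb v0 True by simp
      then have "map unsh (butlast lam) \<in> Qset j m" using a Q_snoc_T by metis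
      then show ?thesis using e2 by (metis UnI2 image_eqI)
    qed
  qed
next
  fix lam assume "lam \<in> map sh ` Qset j (Suc m) \<union> (\<lambda>mu. mu @ [(0, False)]) ` Qset j m
   \<union> (\<lambda>mu. map sh mu @ [(0, True)]) ` Qset j m"
  then show "lam \<in> Qset (Suc j) (Suc m)" using Q_map_sh Q_snoc_F Q_snoc_T by auto
qed

lemma Q_finite: "finite (Qset j k)"
proof -
  have "Qset j k \<subseteq> {xs. set xs \<subseteq> {0..<j} \<times> UNIV \<and> length xs = k}"
  proof
    fix xs assume a: "xs \<in> Qset j k"
    then have len: "length xs = k" unfolding Qset_def by auto
    have "set xs \<subseteq> {0..<j} \<times> UNIV"
    proof
      fix x assume "x \<in> set xs"
      then obtain r where "r < k" "x = xs ! r" using len by (auto simp: in_set_conv_nth)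
      then show "x \<in> {0..<j} \<times> UNIV" using Q_fst_lt[OF a] by (simp add: mem_Times_iff)
    qed
    then show "xs \<in> {xs. set xs \<subseteq> {0..<j} \<times> UNIV \<and> length xs = k}" using len by simp
  qed
  moreover have "finite {xs. set xs \<subseteq> {0..<j} \<times> (UNIV::bool set) \<and> length xs = k}"
    by (rule finite_lists_length_eq) simp
  ultimately show ?thesis by (rule finite_subset)
qed

lemma Q_zero: "Qset j 0 = {[]}"
  unfolding Qset_def is_overpartition_def by auto

lemma Q_empty: "Qset 0 (Suc m) = {}"
  using Q_len by fastforce

definition wt :: "int poly \<Rightarrow> (nat \<times> bool) list \<Rightarrow> int poly" where
  "wt a lam = a ^ op_ol lam * qX ^ op_size lam"

definition T :: "nat \<Rightarrow> nat \<Rightarrow> int poly \<Rightarrow> int poly" where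
  "T j k a = (\<Sum>lam \<in> Qset j k. wt a lam)"

lemma wt_sh: "wt a (map sh mu) = qX ^ length mu * wt a mu"
  by (induction mu) (auto simp: wt_def op_ol_def op_size_def sh_def power_add algebra_simps)

lemma wt_snoc: "wt a (mu @ [(0, b)]) = (if b then a else 1) * wt a mu"
  by (auto simp: wt_def op_ol_def op_size_def)

lemma T_rec: "T (Suc j) (Suc m) a = qX ^ Suc m * T j (Suc m) a + T j m a + a * qX ^ m * T j m a"
proof -
  let ?A = "map sh ` Qset j (Suc m)"
  let ?B = "(\<lambda>mu. mu @ [(0, False)]) ` Qset j m"
  let ?C = "(\<lambda>mu. map sh mu @ [(0, True)]) ` Qset j m"
  have inj_sh: "inj sh" unfolding sh_def by (auto intro: injI)
  have i1: "inj_on (map sh) (Qset j (Suc m))" using inj_sh by (auto intro: inj_onI simp: inj_map_eq_map)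
  have i2: "inj_on (\<lambda>mu. mu @ [(0, False)]) (Qset j m)" by (auto intro: inj_onI)
  have i3: "inj_on (\<lambda>mu. map sh mu @ [(0, True)]) (Qset j m)" using inj_sh by (auto intro: inj_onI simp: inj_map_eq_map)
  have fA: "finite ?A" "finite ?B" "finite ?C" using Q_finite by auto
  have lastsh: "last (map sh mu @ [x]) = x" for mu x by simp
  have dAB: "?A \<inter> ?B = {}"
  proof -
    have "xs \<notin> ?B" if "xs \<in> ?A" for xs
    proof -
      from that obtain mu where mu: "mu \<in> Qset j (Suc m)" "xs = map sh mu" by auto
      then have "mu \<noteq> []" unfolding Qset_def by auto
      then have "fst (last xs) > 0" using mu by (simp add: last_map sh_def)
      then show ?thesis by auto
    qed
    then show ?thesis by blast
  qed
  have dABC: "(?A \<union> ?B) \<inter> ?C = {}"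
  proof -
    have "xs \<notin> ?C" if "xs \<in> ?A \<union> ?B" for xs
    proof -
      have "\<not> (fst (last xs) = 0 \<and> snd (last xs))"
      proof (cases "xs \<in> ?A")
        case True
        then obtain mu where mu: "mu \<in> Qset j (Suc m)" "xs = map sh mu" by auto
        then have "mu \<noteq> []" unfolding Qset_def by auto
        then show ?thesis using mu by (simp add: last_map sh_def)
      next
        case False then show ?thesis using that by auto
      qed
      then show ?thesis by auto
    qed
    then show ?thesis by blast
  qed
  have "T (Suc j) (Suc m) a = sum (wt a) (?A \<union> ?B \<union> ?C)" unfolding T_def Q_decomp ..
  also have "\<dots> = sum (wt a) ?A + sum (wt a) ?B + sum (wt a) ?C"
    using fA dAB dABC by (simp add: sum.union_disjoint)
  also have "sum (wt a) ?A = (\<Sum>mu\<in>Qset j (Suc m). wt a (map sh mu))" using i1 by (simp add: sum.reindex)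
  also have "\<dots> = (\<Sum>mu\<in>Qset j (Suc m). qX ^ Suc m * wt a mu)"
    by (rule sum.cong) (auto simp: wt_sh Qset_def)
  also have "sum (wt a) ?B = (\<Sum>mu\<in>Qset j m. wt a (mu @ [(0, False)]))" using i2 by (simp add: sum.reindex)
  also have "\<dots> = T j m a" by (simp add: wt_snoc T_def)
  also have "sum (wt a) ?C = (\<Sum>mu\<in>Qset j m. wt a (map sh mu @ [(0, True)]))" using i3 by (simp add: sum.reindex)
  also have "\<dots> = (\<Sum>mu\<in>Qset j m. a * qX ^ m * wt a mu)"
    by (rule sum.cong) (auto simp: wt_sh wt_snoc Qset_def)
  finally show ?thesis by (simp add: T_def sum_distrib_left)
qed

lemma T_closed: "T j k a = G j k * (\<Prod>t<k. 1 + a * qX ^ t)"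
proof (induction j arbitrary: k)
  case 0
  then show ?case by (cases k) (auto simp: T_def Q_zero Q_empty wt_def op_ol_def op_size_def)
next
  case (Suc j)
  show ?case
  proof (cases k)
    case 0 then show ?thesis by (auto simp: T_def Q_zero wt_def op_ol_def op_size_def)
  next
    case (Suc m)
    show ?thesis unfolding Suc T_rec Suc.IH by (simp add: algebra_simps)
  qed
qed



lemma term_eq:
  assumes "length lam = k"
  shows "(-1) ^ op_ol lam * qX ^ (op_size lam + op_ol lam * (i - length lam + 1))
            * qX ^ ((i - length lam) * (j - length lam))
       = wt (- (qX ^ (i - k + 1))) lam * qX ^ ((i - k) * (j - k))"
proof -
  have "qX ^ (op_ol lam * (i - k + 1)) = (qX ^ (i - k + 1)) ^ op_ol lam"
    by (metis mult.commute power_mult)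
  note h = this
  have m: "(- (qX ^ (i - k + 1))) ^ op_ol lam = (-1) ^ op_ol lam * (qX ^ (i - k + 1)) ^ op_ol lam"
    by (rule power_minus)
  have a: "qX ^ (op_size lam + op_ol lam * (i - k + 1)) = qX ^ op_size lam * qX ^ (op_ol lam * (i - k + 1))"
    by (rule power_add)
  show ?thesis unfolding wt_def assms a h m by (simp only: mult_ac)
qed

theorem theorem2p2:
  fixes i j :: nat
  assumes "j \<le> i"
  shows "(\<Sum>k = 0..j. qpoch (qX ^ (i - k + 1)) k * qbinom j k * qX ^ ((i - k) * (j - k)))
       = (\<Sum>lam \<in> O_all i j.
            (-1) ^ op_ol lam
            * qX ^ (op_size lam + op_ol lam * (i - length lam + 1))
            * qX ^ ((i - length lam) * (j - length lam)))"

proof -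
  let ?f = "\<lambda>lam. (-1) ^ op_ol lam
            * qX ^ (op_size lam + op_ol lam * (i - length lam + 1))
            * qX ^ ((i - length lam) * (j - length lam))"
  have O: "O_all i j = (\<Union>k\<in>{0..j}. Qset j k)" by (simp add: O_all_def O_set_eq)
  have disj: "\<forall>k\<in>{0..j}. \<forall>k'\<in>{0..j}. k \<noteq> k' \<longrightarrow> Qset j k \<inter> Qset j k' = {}"
    unfolding Qset_def by auto
  have "(\<Sum>lam \<in> O_all i j. ?f lam) = (\<Sum>k = 0..j. \<Sum>lam \<in> Qset j k. ?f lam)"
    unfolding O by (rule sum.UNION_disjoint) (use Q_finite disj in auto)
  also have "\<dots> = (\<Sum>k = 0..j. qpoch (qX ^ (i - k + 1)) k * qbinom j k * qX ^ ((i - k) * (j - k)))"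
  proof (rule sum.cong[OF refl])
    fix k assume k: "k \<in> {0..j}"
    have "(\<Sum>lam \<in> Qset j k. ?f lam) = (\<Sum>lam \<in> Qset j k. wt (- (qX ^ (i - k + 1))) lam * qX ^ ((i - k) * (j - k)))"
      by (rule sum.cong[OF refl]) (rule term_eq, simp add: Qset_def)
    also have "\<dots> = T j k (- (qX ^ (i - k + 1))) * qX ^ ((i - k) * (j - k))"
      by (simp add: T_def sum_distrib_right)
    also have "\<dots> = qpoch (qX ^ (i - k + 1)) k * qbinom j k * qX ^ ((i - k) * (j - k))"
    proof -
      have p: "(\<Prod>t<k. 1 + - (qX ^ (i - k + 1)) * qX ^ t) = qpoch (qX ^ (i - k + 1)) k"
        unfolding qpoch_def by (rule prod.cong) simp_all
      have "qbinom j k = G j k" using k by (simp add: qbinom_G)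
      then show ?thesis unfolding T_closed p by (simp only: mult_ac)
    qed
    finally show "(\<Sum>lam \<in> Qset j k. ?f lam) = qpoch (qX ^ (i - k + 1)) k * qbinom j k * qX ^ ((i - k) * (j - k))" .
  qed
  finally show ?thesis by simp
qed

end
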